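(* Let $L\ge2$ and $0\le p<1$, and let $(\eta_n)_{n\ge0}$ be the Markov chain on $\{0,1\}^L$ with transition function $Q$, started from the stationary distribution $\pi(\omega)=Z^{-1}\prod_{j=0}^{|\omega|-1}c_j/c_{L-j-1}$. Then $$\mathbb E_\pi[\eta_0(0)\eta_1(0)]-\frac14=\frac{2p-1}{4\big(2L(1-p)+2p-1\big)}.$$
   Context: $\Omega=\{0,1\}^L$, $\omega=(\omega(0),\dots,\omega(L-1))$, $|\omega|=\sum_j\omega(j)$. The transition function $Q$ is $Q\big(\eta,(\eta(1),\dots,\eta(L-1),s)\big)=\frac1L\big(|\eta|p+(L-|\eta|)(1-p)\big)$ for $s=1$, $=\frac1L\big((L-|\eta|)p+|\eta|(1-p)\big)$ for $s=0$, and $Q(\eta,\omega)=0$ otherwise. $c_j=(1-p)(1-\frac jL)+\frac jLp$ and $Z$ is a normalizing constant; this $\pi$ is stationary for $Q$. *)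

theory Defs
  imports Complex_Main "HOL-Library.FuncSet"
begin

definition Omega :: "nat \<Rightarrow> (nat \<Rightarrow> nat) set" where
  "Omega L = PiE {0..<L} (\<lambda>_. {0, 1})"

definition weight :: "nat \<Rightarrow> (nat \<Rightarrow> nat) \<Rightarrow> nat" where
  "weight L \<omega> = (\<Sum>j<L. \<omega> j)"

definition shift :: "nat \<Rightarrow> (nat \<Rightarrow> nat) \<Rightarrow> nat \<Rightarrow> (nat \<Rightarrow> nat)" where
  "shift L \<eta> s = (\<lambda>j. if j < L - 1 then \<eta> (j + 1) else if j = L - 1 then s else undefined)"

definition Qtr :: "nat \<Rightarrow> real \<Rightarrow> (nat \<Rightarrow> nat) \<Rightarrow> (nat \<Rightarrow> nat) \<Rightarrow> real" where
  "Qtr L p \<eta> \<omega> =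
     (if \<omega> = shift L \<eta> 1 then
        (real (weight L \<eta>) * p + (real L - real (weight L \<eta>)) * (1 - p)) / real L
      else if \<omega> = shift L \<eta> 0 then
        ((real L - real (weight L \<eta>)) * p + real (weight L \<eta>) * (1 - p)) / real L
      else 0)"

definition cc :: "nat \<Rightarrow> real \<Rightarrow> nat \<Rightarrow> real" where
  "cc L p j = (1 - p) * (1 - real j / real L) + real j / real L * p"

definition unnorm :: "nat \<Rightarrow> real \<Rightarrow> (nat \<Rightarrow> nat) \<Rightarrow> real" where
  "unnorm L p \<omega> = (\<Prod>j<weight L \<omega>. cc L p j / cc L p (L - j - 1))"

definition Zc :: "nat \<Rightarrow> real \<Rightarrow> real" where
  "Zc L p = (\<Sum>\<omega>\<in>Omega L. unnorm L p \<omega>)"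

definition statdist :: "nat \<Rightarrow> real \<Rightarrow> (nat \<Rightarrow> nat) \<Rightarrow> real" where
  "statdist L p \<omega> = unnorm L p \<omega> / Zc L p"

end

theory Submission
  imports Defs
begin
definition consw :: "nat \<Rightarrow> nat \<Rightarrow> (nat\<Rightarrow>nat) \<Rightarrow> (nat\<Rightarrow>nat)" where
 "consw L b \<omega> = (\<lambda>j. if j = 0 then b else if j \<le> L then \<omega> (j-1) else undefined)"

lemma consw_in: "b \<in> {0::nat,1} \<Longrightarrow> \<omega> \<in> Omega L \<Longrightarrow> consw L b \<omega> \<in> Omega (Suc L)"
  unfolding Omega_def PiE_iff
proof (intro conjI ballI)
  fix i assume "b \<in> {0::nat,1}" "(\<forall>i\<in>{0..<L}. \<omega> i \<in> {0, 1}) \<and> \<omega> \<in> extensional {0..<L}" "i \<in> {0..<Suc L}"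
  then show "consw L b \<omega> i \<in> {0,1}"
    by (cases i) (auto simp: consw_def)
next
  show "consw L b \<omega> \<in> extensional {0..<Suc L}" by (auto simp: consw_def extensional_def)
qed

lemma consw_bij: "bij_betw (\<lambda>(b,\<omega>). consw L b \<omega>) ({0::nat,1} \<times> Omega L) (Omega (Suc L))"
proof (rule bij_betw_byWitness[where f'="\<lambda>\<omega>. (\<omega> 0, \<lambda>j. if j < L then \<omega> (j+1) else undefined)"])
  show "\<forall>a\<in>{0::nat,1} \<times> Omega L. (\<lambda>\<omega>. (\<omega> 0, \<lambda>j. if j < L then \<omega> (j+1) else undefined)) ((\<lambda>(b,\<omega>). consw L b \<omega>) a) = a"
    by (auto simp: consw_def Omega_def PiE_iff extensional_def fun_eq_iff)
  show "\<forall>a'\<in>Omega (Suc L). (\<lambda>(b,\<omega>). consw L b \<omega>) ((\<lambda>\<omega>. (\<omega> 0, \<lambda>j. if j < L then \<omega> (j+1) else undefined)) a') = a'"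
    by (auto simp: consw_def Omega_def PiE_iff extensional_def fun_eq_iff)
  show "(\<lambda>(b,\<omega>). consw L b \<omega>) ` ({0::nat,1} \<times> Omega L) \<subseteq> Omega (Suc L)"
    using consw_in by auto
  show "(\<lambda>\<omega>. (\<omega> 0, \<lambda>j. if j < L then \<omega> (j+1) else undefined)) ` Omega (Suc L) \<subseteq> {0::nat,1} \<times> Omega L"
  proof (rule image_subsetI)
    fix x :: "nat \<Rightarrow> nat" assume "x \<in> Omega (Suc L)"
    then have h: "\<forall>i<Suc L. x i \<in> {0,1}" by (auto simp: Omega_def PiE_iff)
    have "x 0 \<in> {0,1}" using h by blast
    moreover have "(\<lambda>j. if j<L then x(j+1) else undefined) \<in> Omega L"
      unfolding Omega_def PiE_iff extensional_def using h by auto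
    ultimately show "(x 0, \<lambda>j. if j < L then x (j+1) else undefined) \<in> {0::nat,1} \<times> Omega L" by blast
  qed
qed

lemma finite_Omega: "finite (Omega L)"
  by (simp add: Omega_def finite_PiE)

lemma sum_Omega_Suc: "(\<Sum>\<omega>\<in>Omega (Suc L). g \<omega>) = (\<Sum>\<omega>\<in>Omega L. g (consw L 0 \<omega>)) + (\<Sum>\<omega>\<in>Omega L. g (consw L 1 \<omega>))"
proof -
  have "(\<Sum>\<omega>\<in>Omega (Suc L). g \<omega>) = (\<Sum>x\<in>{0::nat,1} \<times> Omega L. g ((\<lambda>(b,\<omega>). consw L b \<omega>) x))"
    using sum.reindex_bij_betw[OF consw_bij, of g] by simp
  also have "\<dots> = (\<Sum>b\<in>{0::nat,1}. \<Sum>\<omega>\<in>Omega L. g (consw L b \<omega>))"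
    using sum.cartesian_product[where A="{0::nat,1}" and B="Omega L" and g="\<lambda>b \<omega>. g (consw L b \<omega>)"]
    by (simp add: case_prod_beta)
  finally show ?thesis by simp
qed

lemma weight_consw: "\<omega> \<in> Omega L \<Longrightarrow> weight (Suc L) (consw L b \<omega>) = b + weight L \<omega>"
  unfolding weight_def by (subst sum.lessThan_Suc_shift) (simp add: consw_def)

lemma consw_0: "consw L b \<omega> 0 = b" by (simp add: consw_def)
lemma consw_Suc: "j < L \<Longrightarrow> consw L b \<omega> (Suc j) = \<omega> j" by (simp add: consw_def)

lemma sum_Omega_weight: "(\<Sum>\<omega>\<in>Omega L. F (weight L \<omega>)) = (\<Sum>k\<le>L. real (L choose k) * F k)"
proof (induction L arbitrary: F)
  case 0
  then show ?case by (simp add: Omega_def weight_def)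
next
  case (Suc L)
  have "(\<Sum>\<omega>\<in>Omega (Suc L). F (weight (Suc L) \<omega>)) =
     (\<Sum>\<omega>\<in>Omega L. F (weight L \<omega>)) + (\<Sum>\<omega>\<in>Omega L. F (Suc (weight L \<omega>)))"
    by (simp add: sum_Omega_Suc weight_consw)
  also have "\<dots> = (\<Sum>k\<le>L. real (L choose k) * F k) + (\<Sum>k\<le>L. real (L choose k) * F (Suc k))"
    using Suc.IH[of F] Suc.IH[of "\<lambda>k. F (Suc k)"] by simp
  also have "\<dots> = (\<Sum>k\<le>Suc L. real (Suc L choose k) * F k)"
  proof -
    have A: "(\<Sum>k\<le>Suc L. real (L choose k) * F k) = F 0 + (\<Sum>k\<le>L. real (L choose Suc k) * F (Suc k))"
      by (subst sum.atMost_Suc_shift) simp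
    have B: "(\<Sum>k\<le>Suc L. real (L choose k) * F k) = (\<Sum>k\<le>L. real (L choose k) * F k)"
      by simp
    have C: "(\<Sum>k\<le>Suc L. real (Suc L choose k) * F k) = F 0 + (\<Sum>k\<le>L. real (Suc L choose Suc k) * F (Suc k))"
      by (subst sum.atMost_Suc_shift) simp
    show ?thesis using A B C by (simp add: algebra_simps sum.distrib)
  qed
  finally show ?case .
qed
lemma telesc:
  fixes F G :: "nat \<Rightarrow> real"
  assumes "\<And>k. k < L \<Longrightarrow> F (Suc k) = G k" "G L = 0" "F 0 = 0"
  shows "(\<Sum>k\<le>L. G k) = (\<Sum>k\<le>L. F k)"
proof -
  have "(\<Sum>k\<le>L. G k) = (\<Sum>k<L. G k)"
    using assms(2) by (simp add: lessThan_Suc_atMost[symmetric])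
  also have "\<dots> = (\<Sum>k<L. F (Suc k))" using assms(1) by simp
  also have "\<dots> = (\<Sum>k<Suc L. F k)"
    using assms(3) by (subst sum.lessThan_Suc_shift) simp
  finally show ?thesis by (simp add: lessThan_Suc_atMost)
qed

lemma moments:
  fixes a :: "nat \<Rightarrow> real" and L :: nat and p :: real
  defines "e \<equiv> \<lambda>k::nat. (1-p)*(real L - real k) + p*real k"
  defines "d \<equiv> \<lambda>k::nat. (1-p)*real k + p*(real L - real k)"
  assumes db: "\<And>k. k < L \<Longrightarrow> a (Suc k) * real (Suc k) * d (Suc k) = a k * (real L - real k) * e k"
  assumes L: "L \<ge> 2" and p: "p < 1"
  assumes S0: "(\<Sum>k\<le>L. a k) > 0"
  shows "(\<Sum>k\<le>L. a k * (real k * (real k - 1))) / (real L * (real L - 1)) / (\<Sum>k\<le>L. a k) - 1/4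
     = (2 * p - 1) / (4 * (2 * real L * (1 - p) + 2 * p - 1))"
proof -
  define S0 where "S0 = (\<Sum>k\<le>L. a k)"
  define S1 where "S1 = (\<Sum>k\<le>L. a k * real k)"
  define S2 where "S2 = (\<Sum>k\<le>L. a k * real k ^ 2)"
  have t1: "(\<Sum>k\<le>L. a k * (real L - real k) * e k) = (\<Sum>k\<le>L. a k * real k * d k)"
    by (rule telesc) (use db in auto)
  have t2: "(\<Sum>k\<le>L. a k * (real L - real k) * e k * real k) = (\<Sum>k\<le>L. a k * real k * d k * (real k - 1))"
  proof (rule telesc)
    fix k assume "k < L" then show "a (Suc k) * real (Suc k) * d (Suc k) * (real (Suc k) - 1) = a k * (real L - real k) * e k * real k"
      using db[of k] by simp
  qed auto
  have r1: "(\<Sum>k\<le>L. a k * (real L - real k) * e k - a k * real k * d k) = (1-p) * real L * (real L * S0 - 2 * S1)"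
  proof -
    have "\<And>k. a k * (real L - real k) * e k - a k * real k * d k = ((1-p)*real L*real L) * a k - (2*(1-p)*real L) * (a k * real k)"
      by (simp add: e_def d_def algebra_simps)
    then show ?thesis unfolding S0_def S1_def
      by (simp only: sum_subtractf sum_distrib_left[symmetric]) (simp add: algebra_simps)
  qed
  have eq1: "(1-p) * real L * (real L * S0 - 2 * S1) = 0"
    using r1 t1 by (simp add: sum_subtractf)
  have Lpos: "real L > 0" using L by simp
  have S1v: "S1 = real L * S0 / 2" using eq1 Lpos p by simp
  have r2: "(\<Sum>k\<le>L. a k * (real L - real k) * e k * real k - a k * real k * d k * (real k - 1))
     = ((1-p) * real L ^ 2 + p * real L) * S1 - (2 * (1-p) * real L + 2 * p - 1) * S2"
  proof -
    have "\<And>k. a k * (real L - real k) * e k * real k - a k * real k * d k * (real k - 1) = ((1-p) * real L ^ 2 + p * real L) * (a k * real k) - (2 * (1-p) * real L + 2 * p - 1) * (a k * real k ^ 2)"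
      by (simp add: e_def d_def algebra_simps power2_eq_square)
    then show ?thesis unfolding S1_def S2_def
      by (simp only: sum_subtractf sum_distrib_left[symmetric])
  qed
  have eq2: "((1-p) * real L ^ 2 + p * real L) * S1 = (2 * (1-p) * real L + 2 * p - 1) * S2"
    using r2 t2 by (simp add: sum_subtractf)
  have Dpos: "2 * real L * (1 - p) + 2 * p - 1 > 0"
  proof -
    have L2: "real L \<ge> 2" using L by simp
    have "(real L - 2) * (1-p) \<ge> 0" using L2 p by simp
    then have "2 * real L * (1 - p) \<ge> 4 * (1 - p)" by (simp add: algebra_simps)
    then show ?thesis using p by (simp add: algebra_simps)
  qed
  have num: "(\<Sum>k\<le>L. a k * (real k * (real k - 1))) = S2 - S1"
    unfolding S1_def S2_def by (simp add: sum_subtractf algebra_simps power2_eq_square)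
  have L1: "real L - 1 > 0" using L by simp
  have S0p: "S0 > 0" using S0 S0_def by simp
  have S2v: "S2 = ((1-p) * real L ^ 2 + p * real L) * S1 / (2 * real L * (1 - p) + 2 * p - 1)"
    using eq2 Dpos by (simp add: field_simps)
  define D where "D = 2 * real L * (1 - p) + 2 * p - 1"
  have Dp: "D > 0" using Dpos D_def by simp
  have XD: "((1-p) * real L ^ 2 + p * real L) - D = (real L - 1) * ((1-p) * real L + 2*p - 1)"
    unfolding D_def by (simp add: algebra_simps power2_eq_square)
  have h1: "S2 - S1 = (real L * S0 / 2) * (((1-p) * real L ^ 2 + p * real L) - D) / D"
    using S2v Dp unfolding D_def[symmetric] S1v by (simp add: field_simps)
  have h2: "(S2 - S1) / (real L * (real L - 1)) / S0 = ((1-p) * real L + 2*p - 1) / (2 * D)"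
    unfolding h1 XD using Dp L1 Lpos S0p by (simp add: field_simps)
  have h3: "((1-p) * real L + 2*p - 1) / (2 * D) - 1/4 = (2 * p - 1) / (4 * D)"
    using Dp unfolding D_def by (simp add: field_simps)
  show ?thesis
    using h2 h3 unfolding num S0_def[symmetric] D_def by simp
qed
lemma shift_in:
  assumes "\<eta> \<in> Omega L" "s \<in> {0,1}" "L \<ge> 1"
  shows "shift L \<eta> s \<in> Omega L"
  unfolding Omega_def PiE_iff
proof (intro conjI ballI)
  fix i assume i: "i \<in> {0..<L}"
  show "shift L \<eta> s i \<in> {0,1}"
  proof (cases "i < L - 1")
    case True
    then have "i + 1 \<in> {0..<L}" by auto
    then show ?thesis using assms(1) True by (auto simp: shift_def Omega_def PiE_iff)
  next
    case False
    then have "i = L - 1" using i by auto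
    then show ?thesis using assms(2) False by (simp add: shift_def)
  qed
next
  show "shift L \<eta> s \<in> extensional {0..<L}"
    using assms(3) by (auto simp: shift_def extensional_def)
qed

lemma inner_sum:
  assumes "\<eta> \<in> Omega L" "L \<ge> 2"
  shows "(\<Sum>\<eta>1\<in>Omega L. Qtr L p \<eta> \<eta>1 * real (\<eta>1 0)) = real (\<eta> 1)"
proof -
  define s1 where "s1 = shift L \<eta> 1"
  define s0 where "s0 = shift L \<eta> 0"
  define w where "w = real (weight L \<eta>)"
  define A where "A = (w * p + (real L - w) * (1 - p)) / real L"
  define B where "B = ((real L - w) * p + w * (1 - p)) / real L"
  have neq: "s1 \<noteq> s0"
  proof
    assume "s1 = s0"
    then have "s1 (L-1) = s0 (L-1)" by simp
    then show False by (simp add: s1_def s0_def shift_def)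
  qed
  have in1: "s1 \<in> Omega L" using shift_in[OF assms(1)] assms(2) s1_def by simp
  have in0: "s0 \<in> Omega L" using shift_in[OF assms(1)] assms(2) s0_def by simp
  have Q: "\<And>\<eta>1. Qtr L p \<eta> \<eta>1 * real (\<eta>1 0) = (if \<eta>1 = s1 then A * real (s1 0) else 0) + (if \<eta>1 = s0 then B * real (s0 0) else 0)"
    using neq unfolding Qtr_def s1_def[symmetric] s0_def[symmetric] A_def B_def w_def by auto
  have "(\<Sum>\<eta>1\<in>Omega L. Qtr L p \<eta> \<eta>1 * real (\<eta>1 0)) = A * real (s1 0) + B * real (s0 0)"
    unfolding Q using in1 in0 finite_Omega[of L] by (simp add: sum.distrib)
  also have "s1 0 = \<eta> 1" using assms(2) by (simp add: s1_def shift_def)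
  also have "s0 0 = \<eta> 1" using assms(2) by (simp add: s0_def shift_def)
  also have "A * real (\<eta> 1) + B * real (\<eta> 1) = (A + B) * real (\<eta> 1)" by (simp add: algebra_simps)
  also have "A + B = 1" using assms(2) unfolding A_def B_def by (simp add: field_simps)
  finally show ?thesis by simp
qed

lemma sum_pair:
  "(\<Sum>\<eta>\<in>Omega (Suc (Suc M)). G (weight (Suc (Suc M)) \<eta>) * real (\<eta> 0) * real (\<eta> 1))
    = (\<Sum>\<omega>\<in>Omega M. G (Suc (Suc (weight M \<omega>))))"
proof -
  have "(\<Sum>\<eta>\<in>Omega (Suc (Suc M)). G (weight (Suc (Suc M)) \<eta>) * real (\<eta> 0) * real (\<eta> 1))
     = (\<Sum>\<omega>\<in>Omega (Suc M). G (Suc (weight (Suc M) \<omega>)) * real (\<omega> 0))"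
    by (simp add: sum_Omega_Suc weight_consw consw_0 consw_Suc cong: sum.cong)
  also have "\<dots> = (\<Sum>\<omega>\<in>Omega M. G (Suc (Suc (weight M \<omega>))))"
    by (simp add: sum_Omega_Suc weight_consw consw_0 cong: sum.cong)
  finally show ?thesis .
qed

lemma cc_pos: "L > 0 \<Longrightarrow> j < L \<Longrightarrow> 0 \<le> p \<Longrightarrow> p < 1 \<Longrightarrow> cc L p j > 0"
proof -
  assume a: "L > 0" "j < L" "0 \<le> p" "p < 1"
  have "real j / real L < 1" using a by simp
  then have "(1 - p) * (1 - real j / real L) > 0" using a by simp
  moreover have "real j / real L * p \<ge> 0" using a by simp
  ultimately show ?thesis unfolding cc_def by linarith
qed

theorem mainTheorem16:
  fixes L :: nat and p :: real
  assumes "L \<ge> 2" and "0 \<le> p" and "p < 1"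
  shows "(\<Sum>\<eta>0\<in>Omega L. \<Sum>\<eta>1\<in>Omega L.
            statdist L p \<eta>0 * Qtr L p \<eta>0 \<eta>1 * real (\<eta>0 0) * real (\<eta>1 0)) - 1/4
         = (2 * p - 1) / (4 * (2 * real L * (1 - p) + 2 * p - 1))"
proof -
  obtain M where LM: "L = Suc (Suc M)" using assms(1) by (metis add_2_eq_Suc le_Suc_ex)
  define U where "U = (\<lambda>k. \<Prod>j<k. cc L p j / cc L p (L - j - 1))"
  define a where "a = (\<lambda>k. real (L choose k) * U k)"
  have unn: "\<And>\<omega>. unnorm L p \<omega> = U (weight L \<omega>)" by (simp add: unnorm_def U_def)
  have Upos: "\<And>k. k \<le> L \<Longrightarrow> U k > 0"
  proof -
    fix k assume k: "k \<le> L"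
    show "U k > 0" unfolding U_def
    proof (rule prod_pos)
      fix j assume "j \<in> {..<k}"
      then have "j < L" using k by simp
      then have "cc L p j > 0" "cc L p (L - j - 1) > 0" using cc_pos assms LM by auto
      then show "cc L p j / cc L p (L - j - 1) > 0" by simp
    qed
  qed
  have step1: "(\<Sum>\<eta>0\<in>Omega L. \<Sum>\<eta>1\<in>Omega L.
            statdist L p \<eta>0 * Qtr L p \<eta>0 \<eta>1 * real (\<eta>0 0) * real (\<eta>1 0))
        = (\<Sum>\<eta>\<in>Omega L. statdist L p \<eta> * real (\<eta> 0) * real (\<eta> 1))"
  proof (rule sum.cong)
    fix \<eta> assume h: "\<eta> \<in> Omega L"
    have "(\<Sum>\<eta>1\<in>Omega L. statdist L p \<eta> * Qtr L p \<eta> \<eta>1 * real (\<eta> 0) * real (\<eta>1 0))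
        = (statdist L p \<eta> * real (\<eta> 0)) * (\<Sum>\<eta>1\<in>Omega L. Qtr L p \<eta> \<eta>1 * real (\<eta>1 0))"
      by (simp add: sum_distrib_left algebra_simps)
    also have "\<dots> = statdist L p \<eta> * real (\<eta> 0) * real (\<eta> 1)"
      using inner_sum[OF h assms(1)] by simp
    finally show "(\<Sum>\<eta>1\<in>Omega L. statdist L p \<eta> * Qtr L p \<eta> \<eta>1 * real (\<eta> 0) * real (\<eta>1 0)) = statdist L p \<eta> * real (\<eta> 0) * real (\<eta> 1)" .
  qed simp
  have step2: "(\<Sum>\<eta>\<in>Omega L. statdist L p \<eta> * real (\<eta> 0) * real (\<eta> 1))
      = (\<Sum>k\<le>M. real (M choose k) * U (Suc (Suc k))) / Zc L p"
  proof -
    have "(\<Sum>\<eta>\<in>Omega L. statdist L p \<eta> * real (\<eta> 0) * real (\<eta> 1))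
        = (\<Sum>\<eta>\<in>Omega L. U (weight L \<eta>) * real (\<eta> 0) * real (\<eta> 1)) / Zc L p"
      by (simp add: statdist_def unn sum_divide_distrib)
    also have "(\<Sum>\<eta>\<in>Omega L. U (weight L \<eta>) * real (\<eta> 0) * real (\<eta> 1)) = (\<Sum>\<omega>\<in>Omega M. U (Suc (Suc (weight M \<omega>))))"
      unfolding LM by (rule sum_pair)
    also have "\<dots> = (\<Sum>k\<le>M. real (M choose k) * U (Suc (Suc k)))"
      by (rule sum_Omega_weight)
    finally show ?thesis .
  qed
  have Zc: "Zc L p = (\<Sum>k\<le>L. a k)"
    unfolding Zc_def unn a_def by (rule sum_Omega_weight)
  have Zpos: "(\<Sum>k\<le>L. a k) > 0"
  proof -
    have "(\<Sum>k\<le>L. a k) \<ge> (\<Sum>k\<in>{0}. a k)"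
      by (rule sum_mono2) (auto simp: a_def intro!: mult_nonneg_nonneg less_imp_le[OF Upos])
    moreover have "a 0 > 0" using Upos[of 0] by (simp add: a_def)
    ultimately show ?thesis by simp
  qed
  have numer: "(\<Sum>k\<le>L. a k * (real k * (real k - 1))) = real L * (real L - 1) * (\<Sum>k\<le>M. real (M choose k) * U (Suc (Suc k)))"
  proof -
    have "(\<Sum>k\<le>L. a k * (real k * (real k - 1))) = (\<Sum>k\<le>M. a (Suc (Suc k)) * (real (Suc (Suc k)) * real (Suc k)))"
      unfolding LM by (simp add: sum.atMost_Suc_shift del: sum.atMost_Suc)
    also have "\<dots> = (\<Sum>k\<le>M. real L * (real L - 1) * (real (M choose k) * U (Suc (Suc k))))"
    proof (rule sum.cong)
      fix k assume "k \<in> {..M}"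
      have n: "Suc (Suc k) * Suc k * (Suc (Suc M) choose Suc (Suc k)) = Suc (Suc M) * Suc M * (M choose k)"
        by (metis Suc_times_binomial mult.assoc mult.commute)
      have "real (Suc (Suc k)) * real (Suc k) * real (L choose Suc (Suc k)) = real L * (real L - 1) * real (M choose k)"
        using arg_cong[OF n, of real] unfolding LM by (simp only: of_nat_mult) simp
      then show "a (Suc (Suc k)) * (real (Suc (Suc k)) * real (Suc k)) = real L * (real L - 1) * (real (M choose k) * U (Suc (Suc k)))"
        unfolding a_def by (metis (no_types, lifting) mult.assoc mult.commute)
    qed simp
    finally show ?thesis by (simp add: sum_distrib_left)
  qed
  have db: "\<And>k. k < L \<Longrightarrow> a (Suc k) * real (Suc k) * ((1-p)*real (Suc k) + p*(real L - real (Suc k)))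
        = a k * (real L - real k) * ((1-p)*(real L - real k) + p*real k)"
  proof -
    fix k assume k: "k < L"
    have Lp: "real L > 0" using LM by simp
    have c1: "cc L p k * real L = (1-p)*(real L - real k) + p*real k"
      unfolding cc_def using Lp by (simp add: field_simps)
    have c2: "cc L p (L - k - 1) * real L = (1-p)*real (Suc k) + p*(real L - real (Suc k))"
      unfolding cc_def using Lp k by (simp add: field_simps of_nat_diff)
    have c2p: "cc L p (L - k - 1) > 0" using cc_pos assms k by auto
    have US: "U (Suc k) = U k * (cc L p k / cc L p (L - k - 1))" by (simp add: U_def)
    have Ueq: "U (Suc k) * ((1-p)*real (Suc k) + p*(real L - real (Suc k))) = U k * ((1-p)*(real L - real k) + p*real k)"
      unfolding US c2[symmetric] c1[symmetric] using c2p by simp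
    have nb: "Suc k * (L choose Suc k) = (L - k) * (L choose k)"
      by (metis binomial_absorption binomial_absorb_comp)
    have rb: "real (Suc k) * real (L choose Suc k) = (real L - real k) * real (L choose k)"
      using arg_cong[OF nb, of real] k by (simp add: of_nat_diff algebra_simps)
    show "a (Suc k) * real (Suc k) * ((1-p)*real (Suc k) + p*(real L - real (Suc k)))
        = a k * (real L - real k) * ((1-p)*(real L - real k) + p*real k)"
      unfolding a_def
      by (metis (no_types, lifting) Ueq rb mult.assoc mult.commute)
  qed
  note mom = moments[of L a p, OF db assms(1) assms(3) Zpos]
  show ?thesis
  proof -
    have nz: "real L * (real L - 1) \<noteq> 0" using assms(1) by simp
    have "real L * (real L - 1) * (\<Sum>k\<le>M. real (M choose k) * U (Suc (Suc k))) / (real L * (real L - 1))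
       = (\<Sum>k\<le>M. real (M choose k) * U (Suc (Suc k)))" using nz by simp
    then show ?thesis
      unfolding step1 step2 using mom unfolding numer Zc[symmetric] by simp
  qed
qed

end
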